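(* There exists a constant $\lambda\ge1$ such that, if $S=(L_t)_{t=0}^{T-1}$ is an SINR-schedule that supports a multi-commodity flow $f\in\mathcal{F}$, then $f/\lambda$ is a feasible solution of the linear program $\textsc{MaxTh}_{LP}$. Hence $F^*\ge|f|/\lambda$.
   Context: Constants $\alpha\ge0,N>0,\beta>0$. Nodes $V$ ($|V|=n$) in the plane; a link is $e=(s_e,r_e,P_e)$, $\mathcal{L}$ the set of links. $d_e=d(s_e,r_e)$, $d_{e'e}=d(s_{e'},r_e)$, $S_e=P_e/d_e^\alpha$, $S_{e'e}=P_{e'}/d_{e'e}^\alpha$, $\gamma_e=\beta S_e/(S_e-\beta N)$, $a_{e'}(e)=\gamma_eS_{e'e}/S_e$, $\bar a_{e'}(e)=\min\{1,a_{e'}(e)\}$. $L$ is SINR-feasible if $S_e/(N+\sum_{e'\in L\setminus\{e\}}S_{e'e})\ge\beta$ for all $e\in L$. Buckets: $S_{\min}=\min_eS_e$, $B_i=\{e:2^iS_{\min}\le S_e<2^{i+1}S_{\min}\}$. Standing assumption: a constant $\varepsilon>0$ with $S_e/N\ge(1+\varepsilon)\beta$ for all $e\in\mathcal{L}$. Requests $(\hat s_j,\hat t_j,b_j)$, $j=1..k$. $\mathcal{F}$ is the set of multi-commodity flows $f=(f_1,\dots,f_k)$ in $(V,\mathcal{L})$ ($f_j$ a flow from $\hat s_j$ to $\hat t_j$) with $f(e)=\sum_jf_j(e)\le1$ for all $e$ and $|f_j|\le b_j$; $|f|=\sum_j|f_j|$. A schedule $(L_t)_{t=0}^{T-1}$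 is an SINR-schedule if each $L_t$ is SINR-feasible, and supports $f$ if $Tf(e)\le|\{t:e\in L_t\}|$ for all $e$. $\textsc{MaxTh}_{LP}$: maximize $|f|$ subject to $f\in\mathcal{F}$ and, for every $i$ and every $e\in B_i$, $f(e)+\sum_{\{e'\in B_i:d_{e'}\ge d_e\}}(\bar a_{e'}(e)+\bar a_e(e'))f(e')\le1$; $F^*$ is its optimum. *)

theory Defs
  imports Complex_Main
begin

text \<open>Nodes are points of the plane (modelled as complex numbers).
  A link is a triple (sender, receiver, transmission power).\<close>

type_synonym node = complex
type_synonym link = "complex \<times> complex \<times> real"

definition snd_node :: "link \<Rightarrow> node" where "snd_node e = fst e"
definition rcv_node :: "link \<Rightarrow> node" where "rcv_node e = fst (snd e)"
definition power :: "link \<Rightarrow> real" where "power e = snd (snd e)"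

text \<open>d^alpha with the convention d^0 = 1 (also for d = 0).\<close>
definition dpow :: "real \<Rightarrow> real \<Rightarrow> real" where
  "dpow \<alpha> d = (if \<alpha> = 0 then 1 else d powr \<alpha>)"

definition len :: "link \<Rightarrow> real" where "len e = dist (snd_node e) (rcv_node e)"
definition xdist :: "link \<Rightarrow> link \<Rightarrow> real" where
  "xdist e' e = dist (snd_node e') (rcv_node e)"

text \<open>S_e and S_{e'e}; S_{e'e} is only meaningful when dpow (xdist e' e) > 0,
  otherwise it is infinite (handled explicitly below).\<close>
definition sig :: "real \<Rightarrow> link \<Rightarrow> real" where
  "sig \<alpha> e = power e / dpow \<alpha> (len e)"
definition xsig :: "real \<Rightarrow> link \<Rightarrow> link \<Rightarrow> real" where
  "xsig \<alpha> e' e = power e' / dpow \<alpha> (xdist e' e)"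

definition gam :: "real \<Rightarrow> real \<Rightarrow> real \<Rightarrow> link \<Rightarrow> real" where
  "gam \<alpha> N \<beta> e = \<beta> * sig \<alpha> e / (sig \<alpha> e - \<beta> * N)"

text \<open>\bar a_{e'}(e) = min 1 a_{e'}(e); equal to 1 if S_{e'e} is infinite.\<close>
definition abar :: "real \<Rightarrow> real \<Rightarrow> real \<Rightarrow> link \<Rightarrow> link \<Rightarrow> real" where
  "abar \<alpha> N \<beta> e' e =
     (if dpow \<alpha> (xdist e' e) = 0 then 1
      else min 1 (gam \<alpha> N \<beta> e * xsig \<alpha> e' e / sig \<alpha> e))"

text \<open>SINR-feasibility; interference from a sender located at the receiver
  (infinite interference) makes the set infeasible.\<close>
definition sinr_feasible :: "real \<Rightarrow> real \<Rightarrow> real \<Rightarrow> link set \<Rightarrow> bool" where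
  "sinr_feasible \<alpha> N \<beta> L \<longleftrightarrow>
     (\<forall>e\<in>L. (\<forall>e'\<in>L - {e}. dpow \<alpha> (xdist e' e) > 0) \<and>
             sig \<alpha> e / (N + (\<Sum>e'\<in>L - {e}. xsig \<alpha> e' e)) \<ge> \<beta>)"

definition Smin :: "real \<Rightarrow> link set \<Rightarrow> real" where
  "Smin \<alpha> Lk = Min (sig \<alpha> ` Lk)"

definition bucket :: "real \<Rightarrow> link set \<Rightarrow> nat \<Rightarrow> link set" where
  "bucket \<alpha> Lk i = {e \<in> Lk. 2 ^ i * Smin \<alpha> Lk \<le> sig \<alpha> e \<and> sig \<alpha> e < 2 ^ (i + 1) * Smin \<alpha> Lk}"

text \<open>Multi-commodity flows: commodity j < k, f j e = flow of commodity j on link e.\<close>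
definition flow_val :: "link set \<Rightarrow> node \<Rightarrow> (link \<Rightarrow> real) \<Rightarrow> real" where
  "flow_val Lk s g = (\<Sum>e\<in>{e\<in>Lk. snd_node e = s}. g e) - (\<Sum>e\<in>{e\<in>Lk. rcv_node e = s}. g e)"

definition tot_flow :: "nat \<Rightarrow> (nat \<Rightarrow> link \<Rightarrow> real) \<Rightarrow> link \<Rightarrow> real" where
  "tot_flow k f e = (\<Sum>j<k. f j e)"

definition tot_val :: "link set \<Rightarrow> nat \<Rightarrow> (nat \<Rightarrow> node) \<Rightarrow> (nat \<Rightarrow> link \<Rightarrow> real) \<Rightarrow> real" where
  "tot_val Lk k src f = (\<Sum>j<k. flow_val Lk (src j) (f j))"

definition is_flow :: "node set \<Rightarrow> link set \<Rightarrow> node \<Rightarrow> node \<Rightarrow> (link \<Rightarrow> real) \<Rightarrow> bool" where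
  "is_flow V Lk s t g \<longleftrightarrow>
     (\<forall>e\<in>Lk. 0 \<le> g e) \<and>
     (\<forall>v\<in>V. v \<noteq> s \<and> v \<noteq> t \<longrightarrow>
        (\<Sum>e\<in>{e\<in>Lk. rcv_node e = v}. g e) = (\<Sum>e\<in>{e\<in>Lk. snd_node e = v}. g e))"

definition in_F :: "node set \<Rightarrow> link set \<Rightarrow> nat \<Rightarrow> (nat \<Rightarrow> node) \<Rightarrow> (nat \<Rightarrow> node)
     \<Rightarrow> (nat \<Rightarrow> real) \<Rightarrow> (nat \<Rightarrow> link \<Rightarrow> real) \<Rightarrow> bool" where
  "in_F V Lk k src snk b f \<longleftrightarrow>
     (\<forall>j<k. is_flow V Lk (src j) (snk j) (f j) \<and> flow_val Lk (src j) (f j) \<le> b j) \<and>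
     (\<forall>e\<in>Lk. tot_flow k f e \<le> 1)"

definition lp_feasible :: "real \<Rightarrow> real \<Rightarrow> real \<Rightarrow> node set \<Rightarrow> link set \<Rightarrow> nat \<Rightarrow> (nat \<Rightarrow> node)
     \<Rightarrow> (nat \<Rightarrow> node) \<Rightarrow> (nat \<Rightarrow> real) \<Rightarrow> (nat \<Rightarrow> link \<Rightarrow> real) \<Rightarrow> bool" where
  "lp_feasible \<alpha> N \<beta> V Lk k src snk b f \<longleftrightarrow>
     in_F V Lk k src snk b f \<and>
     (\<forall>i. \<forall>e\<in>bucket \<alpha> Lk i.
        tot_flow k f e +
        (\<Sum>e'\<in>{e'\<in>bucket \<alpha> Lk i. len e' \<ge> len e}.
            (abar \<alpha> N \<beta> e' e + abar \<alpha> N \<beta> e e') * tot_flow k f e') \<le> 1)"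

definition Fstar :: "real \<Rightarrow> real \<Rightarrow> real \<Rightarrow> node set \<Rightarrow> link set \<Rightarrow> nat \<Rightarrow> (nat \<Rightarrow> node)
     \<Rightarrow> (nat \<Rightarrow> node) \<Rightarrow> (nat \<Rightarrow> real) \<Rightarrow> real" where
  "Fstar \<alpha> N \<beta> V Lk k src snk b =
     Sup {tot_val Lk k src g | g. lp_feasible \<alpha> N \<beta> V Lk k src snk b g}"

definition sinr_schedule :: "real \<Rightarrow> real \<Rightarrow> real \<Rightarrow> link set \<Rightarrow> nat \<Rightarrow> (nat \<Rightarrow> link set) \<Rightarrow> bool" where
  "sinr_schedule \<alpha> N \<beta> Lk T Ls \<longleftrightarrow> (\<forall>t<T. Ls t \<subseteq> Lk \<and> sinr_feasible \<alpha> N \<beta> (Ls t))"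

definition supports :: "link set \<Rightarrow> nat \<Rightarrow> (nat \<Rightarrow> link set) \<Rightarrow> nat \<Rightarrow> (nat \<Rightarrow> link \<Rightarrow> real) \<Rightarrow> bool" where
  "supports Lk T Ls k f \<longleftrightarrow>
     (\<forall>e\<in>Lk. real T * tot_flow k f e \<le> real (card {t. t < T \<and> e \<in> Ls t}))"

definition instance_ok :: "real \<Rightarrow> real \<Rightarrow> real \<Rightarrow> real \<Rightarrow> node set \<Rightarrow> link set \<Rightarrow> bool" where
  "instance_ok \<alpha> N \<beta> \<epsilon> V Lk \<longleftrightarrow>
     finite V \<and> finite Lk \<and> Lk \<noteq> {} \<and>
     (\<forall>e\<in>Lk. snd_node e \<in> V \<and> rcv_node e \<in> V \<and> snd_node e \<noteq> rcv_node e \<and> power e > 0 \<and>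
             sig \<alpha> e / N \<ge> (1 + \<epsilon>) * \<beta>)"

end

theory Submission
  imports Defs
begin

lemma dpow_pos: "\<alpha> \<ge> 0 \<Longrightarrow> d > 0 \<Longrightarrow> dpow \<alpha> d > 0"
  by (simp add: dpow_def)

lemma key:
  assumes "\<alpha> \<ge> 0" "0 < u" "u \<le> v" "0 \<le> x" "0 \<le> z" "dpow \<alpha> z > 0" "z \<le> a*v + b*x"
    "a \<ge> 0" "b \<ge> 0" "a + b > 0" "0 \<le> c'" "c' \<le> c"
  shows "(if dpow \<alpha> x = 0 then 1 else min 1 (c' * dpow \<alpha> u / dpow \<alpha> x))
         \<le> max 1 c * ((a+b) powr \<alpha>) * dpow \<alpha> v / dpow \<alpha> z"
proof (cases "\<alpha> = 0")
  case True
  then show ?thesis using assms by (simp add: dpow_def)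
next
  case False
  hence ap: "\<alpha> > 0" using assms by simp
  have dp: "dpow \<alpha> w = w powr \<alpha>" for w using False by (simp add: dpow_def)
  have zp: "z > 0" using assms(5,6) dp[of z] by (cases "z = 0") auto
  have vp: "v > 0" using assms by simp
  have R: "max 1 c * ((a+b) powr \<alpha>) * dpow \<alpha> v / dpow \<alpha> z = max 1 c * (((a+b)*v/z) powr \<alpha>)"
    using assms zp vp by (simp add: dp powr_mult powr_divide)
  have LHS1: "(if dpow \<alpha> x = 0 then 1 else min 1 (c' * dpow \<alpha> u / dpow \<alpha> x)) \<le> 1" by simp
  show ?thesis
  proof (cases "x \<le> v")
    case True
    have "b*x \<le> b*v" using mult_left_mono[OF True assms(9)] .
    hence "z \<le> (a+b)*v" using assms by (simp add: distrib_right)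
    hence "1 \<le> (a+b)*v/z" using zp by simp
    hence "1 \<le> ((a+b)*v/z) powr \<alpha>" using ap by (simp add: ge_one_powr_ge_zero)
    hence "1 * 1 \<le> max 1 c * (((a+b)*v/z) powr \<alpha>)"
      by (intro mult_mono) auto
    then show ?thesis using R LHS1 by linarith
  next
    case False
    hence xp: "x > 0" using vp by simp
    have dx: "dpow \<alpha> x > 0" using xp by (simp add: dp)
    have "a*v \<le> a*x" using mult_left_mono[of v x a] False assms(8) by simp
    hence "z \<le> (a+b)*x" using assms by (simp add: distrib_right)
    hence "z * u \<le> ((a+b)*x)*v" using assms zp xp
      by (intro mult_mono) auto
    hence q: "u/x \<le> (a+b)*v/z" using zp xp by (simp add: field_simps)
    have "(u/x) powr \<alpha> \<le> ((a+b)*v/z) powr \<alpha>"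
      using q assms xp ap by (intro powr_mono2) auto
    hence q2: "dpow \<alpha> u / dpow \<alpha> x \<le> ((a+b)*v/z) powr \<alpha>"
      using assms xp by (simp add: dp powr_divide)
    have "min 1 (c' * dpow \<alpha> u / dpow \<alpha> x) \<le> c' * (dpow \<alpha> u / dpow \<alpha> x)" by simp
    also have "\<dots> \<le> max 1 c * (((a+b)*v/z) powr \<alpha>)"
      using q2 assms by (intro mult_mono) (auto simp: dp)
    finally show ?thesis using R dx by simp
  qed
qed

lemma basic:
  assumes "\<alpha>\<ge>0" "N>0" "\<beta>>0" "\<epsilon>>0" "instance_ok \<alpha> N \<beta> \<epsilon> V Lk" "e\<in>Lk"
  shows "sig \<alpha> e > 0" "len e > 0" "dpow \<alpha> (len e) > 0"
    "power e = sig \<alpha> e * dpow \<alpha> (len e)" "gam \<alpha> N \<beta> e \<ge> 0"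
    "gam \<alpha> N \<beta> e \<le> \<beta>*(1+\<epsilon>)/\<epsilon>" "power e > 0"
proof -
  have h: "snd_node e \<noteq> rcv_node e" "power e > 0" "sig \<alpha> e / N \<ge> (1 + \<epsilon>) * \<beta>"
    using assms(5,6) unfolding instance_ok_def by auto
  have S: "sig \<alpha> e \<ge> (1+\<epsilon>)*\<beta>*N" using h(3) assms(2) by (simp add: field_simps)
  have "(1+\<epsilon>)*\<beta>*N > 0" using assms by simp
  thus sp: "sig \<alpha> e > 0" using S by linarith
  show lp: "len e > 0" using h(1) by (simp add: len_def)
  show dp: "dpow \<alpha> (len e) > 0" using lp assms(1) by (rule dpow_pos[rotated])
  show "power e = sig \<alpha> e * dpow \<alpha> (len e)" using dp by (simp add: sig_def)
  show "power e > 0" by (rule h(2))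
  have d: "sig \<alpha> e - \<beta>*N \<ge> \<epsilon>*\<beta>*N" using S by (simp add: algebra_simps)
  have d2: "\<epsilon>*\<beta>*N > 0" using assms by simp
  show "gam \<alpha> N \<beta> e \<ge> 0" unfolding gam_def using sp d d2 assms(3) by simp
  have "\<beta> * sig \<alpha> e * \<epsilon> \<le> \<beta>*(1+\<epsilon>) * (sig \<alpha> e - \<beta>*N)"
  proof -
    have "\<beta> * ((1+\<epsilon>)*\<beta>*N) \<le> \<beta> * sig \<alpha> e" using S assms(3) by simp
    thus ?thesis by (simp add: algebra_simps)
  qed
  thus "gam \<alpha> N \<beta> e \<le> \<beta>*(1+\<epsilon>)/\<epsilon>" unfolding gam_def using d d2 assms(4)
    by (simp add: field_simps)
qed

lemma bucket_ratio:
  assumes "e1 \<in> bucket \<alpha> Lk i" "e2 \<in> bucket \<alpha> Lk i"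
  shows "sig \<alpha> e1 \<le> 2 * sig \<alpha> e2"
  using assms unfolding bucket_def by auto

lemma obtain_min:
  assumes "finite A" "A \<noteq> {}"
  shows "\<exists>x\<in>A. \<forall>y\<in>A. (g x::real) \<le> g y"
proof -
  have "Min (g ` A) \<in> g ` A" using assms by simp
  then obtain x where "x \<in> A" "g x = Min (g ` A)" by auto
  thus ?thesis using assms by (metis Min_le finite_imageI imageI)
qed

lemma feas_sum:
  assumes "\<alpha>\<ge>0" "N>0" "\<beta>>0" "\<epsilon>>0" "instance_ok \<alpha> N \<beta> \<epsilon> V Lk"
    "L \<subseteq> Lk" "sinr_feasible \<alpha> N \<beta> L" "e2 \<in> L" "A' \<subseteq> L - {e2}"
    "\<forall>e'\<in>A'. sig \<alpha> e2 \<le> 2 * sig \<alpha> e'"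
  shows "(\<Sum>e'\<in>A'. dpow \<alpha> (len e') / dpow \<alpha> (xdist e' e2)) \<le> 2/\<beta>"
proof -
  have fin: "finite L" using assms(5,6) unfolding instance_ok_def by (auto intro: finite_subset)
  have pos: "dpow \<alpha> (xdist e' e2) > 0" if "e' \<in> L - {e2}" for e'
    using assms(7,8) that unfolding sinr_feasible_def by blast
  have sf: "sig \<alpha> e2 / (N + (\<Sum>e'\<in>L - {e2}. xsig \<alpha> e' e2)) \<ge> \<beta>"
    using assms(7,8) unfolding sinr_feasible_def by blast
  have xs0: "xsig \<alpha> e' e2 \<ge> 0" if "e' \<in> L - {e2}" for e'
    using pos[OF that] basic(7)[OF assms(1-5), of e'] that assms(6)
    unfolding xsig_def by auto
  define X where "X = (\<Sum>e'\<in>L - {e2}. xsig \<alpha> e' e2)"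
  have X0: "X \<ge> 0" unfolding X_def using xs0 by (intro sum_nonneg) blast
  have "\<beta> * (N + X) \<le> sig \<alpha> e2" using sf X0 assms(2) unfolding X_def[symmetric]
    by (simp add: field_simps)
  hence sX: "\<beta> * X \<le> sig \<alpha> e2" using assms(2,3)
    by (smt (verit) mult_pos_pos distrib_left)
  have s2: "sig \<alpha> e2 > 0" using basic(1)[OF assms(1-5), of e2] assms(6,8) by blast
  have "(\<Sum>e'\<in>A'. sig \<alpha> e2 / 2 * (dpow \<alpha> (len e') / dpow \<alpha> (xdist e' e2)))
        \<le> (\<Sum>e'\<in>A'. xsig \<alpha> e' e2)"
  proof (rule sum_mono)
    fix e' assume e': "e' \<in> A'"
    hence eL: "e' \<in> L - {e2}" using assms(9) by auto
    have "e' \<in> Lk" using eL assms(6) by auto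
    note bb = basic[OF assms(1-5) this]
    have "xsig \<alpha> e' e2 = sig \<alpha> e' * (dpow \<alpha> (len e') / dpow \<alpha> (xdist e' e2))"
      unfolding xsig_def bb(4) by simp
    moreover have "sig \<alpha> e2 / 2 \<le> sig \<alpha> e'" using assms(10) e' by auto
    moreover have "dpow \<alpha> (len e') / dpow \<alpha> (xdist e' e2) \<ge> 0" using bb(3) pos[OF eL] by simp
    ultimately show "sig \<alpha> e2 / 2 * (dpow \<alpha> (len e') / dpow \<alpha> (xdist e' e2)) \<le> xsig \<alpha> e' e2"
      by (metis mult_right_mono)
  qed
  also have "\<dots> \<le> X" unfolding X_def
    using assms(9) fin xs0 by (intro sum_mono2) auto
  finally have "sig \<alpha> e2 / 2 * (\<Sum>e'\<in>A'. dpow \<alpha> (len e') / dpow \<alpha> (xdist e' e2)) \<le> X"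
    by (simp add: sum_distrib_left)
  hence "\<beta> * (sig \<alpha> e2 / 2 * (\<Sum>e'\<in>A'. dpow \<alpha> (len e') / dpow \<alpha> (xdist e' e2))) \<le> sig \<alpha> e2"
    using sX assms(3) by (smt (verit) mult_left_mono)
  thus ?thesis using s2 assms(3) by (simp add: field_simps)
qed

lemma abar_le1: "abar \<alpha> N \<beta> e' e \<le> 1" unfolding abar_def by simp

lemma part2:
  assumes "\<alpha>\<ge>0" "N>0" "\<beta>>0" "\<epsilon>>0" "instance_ok \<alpha> N \<beta> \<epsilon> V Lk"
    "L \<subseteq> Lk" "sinr_feasible \<alpha> N \<beta> L" "e \<in> bucket \<alpha> Lk i"
  shows "(\<Sum>e'\<in>{e'\<in>L. e' \<in> bucket \<alpha> Lk i \<and> len e \<le> len e'}. abar \<alpha> N \<beta> e e')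
     \<le> 1 + max 1 (2*(\<beta>*(1+\<epsilon>)/\<epsilon>)) * 3 powr \<alpha> * (2/\<beta>)"
proof -
  define A where "A = {e'\<in>L. e' \<in> bucket \<alpha> Lk i \<and> len e \<le> len e'}"
  define M where "M = max 1 (2*(\<beta>*(1+\<epsilon>)/\<epsilon>))"
  have M1: "M \<ge> 1" unfolding M_def by simp
  have K0: "M * 3 powr \<alpha> \<ge> 0" using M1 by simp
  have fin: "finite L" using assms(5,6) unfolding instance_ok_def by (auto intro: finite_subset)
  hence finA: "finite A" unfolding A_def by simp
  have eLk: "e \<in> Lk" using assms(8) unfolding bucket_def by simp
  note be = basic[OF assms(1-5) eLk]
  show ?thesis
  proof (cases "A = {}")
    case True thus ?thesis using K0 assms(3) unfolding A_def[symmetric] M_def[symmetric] by simp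
  next
    case False
    obtain e2 where e2: "e2 \<in> A" "\<forall>y\<in>A. dist (snd_node e) (rcv_node e2) \<le> dist (snd_node e) (rcv_node y)"
      using obtain_min[OF finA False, of "\<lambda>y. dist (snd_node e) (rcv_node y)"] by blast
    have e2L: "e2 \<in> L" using e2 unfolding A_def by simp
    have bnd: "abar \<alpha> N \<beta> e e' \<le> M * 3 powr \<alpha> * (dpow \<alpha> (len e') / dpow \<alpha> (xdist e' e2))"
      if e': "e' \<in> A - {e2}" for e'
    proof -
      have e'L: "e' \<in> L" "e' \<in> bucket \<alpha> Lk i" "len e \<le> len e'" "e' \<noteq> e2"
        using e' unfolding A_def by auto
      have e'Lk: "e' \<in> Lk" using e'L assms(6) by auto
      note bb = basic[OF assms(1-5) e'Lk]
      have zpos: "dpow \<alpha> (xdist e' e2) > 0"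
        using assms(7) e2L e'L unfolding sinr_feasible_def by blast
      define c' where "c' = gam \<alpha> N \<beta> e' * sig \<alpha> e / sig \<alpha> e'"
      have c'0: "c' \<ge> 0" unfolding c'_def using bb be by simp
      have "sig \<alpha> e / sig \<alpha> e' \<le> 2" using bucket_ratio[OF assms(8) e'L(2)] bb(1)
        by (simp add: field_simps)
      moreover have "c' = gam \<alpha> N \<beta> e' * (sig \<alpha> e / sig \<alpha> e')" unfolding c'_def by simp
      moreover have "sig \<alpha> e / sig \<alpha> e' \<ge> 0" using bb be by simp
      ultimately have "c' \<le> (\<beta>*(1+\<epsilon>)/\<epsilon>) * 2"
      proof -
        assume a: "sig \<alpha> e / sig \<alpha> e' \<le> 2" "c' = gam \<alpha> N \<beta> e' * (sig \<alpha> e / sig \<alpha> e')"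
          "0 \<le> sig \<alpha> e / sig \<alpha> e'"
        have "0 \<le> \<beta>*(1+\<epsilon>)/\<epsilon>" using bb(5,6) by linarith
        thus ?thesis using mult_mono[OF bb(6) a(1)] a by simp
      qed
      hence c'M: "c' \<le> 2*(\<beta>*(1+\<epsilon>)/\<epsilon>)" by (simp add: mult.commute)
      have tri: "xdist e' e2 \<le> 1 * len e' + 2 * xdist e e'"
      proof -
        have "xdist e' e2 \<le> dist (snd_node e') (rcv_node e') + dist (rcv_node e') (snd_node e)
              + dist (snd_node e) (rcv_node e2)"
          unfolding xdist_def
          using dist_triangle[of "snd_node e'" "rcv_node e2" "rcv_node e'"]
            dist_triangle[of "rcv_node e'" "rcv_node e2" "snd_node e"] by linarith
        moreover have "dist (snd_node e) (rcv_node e2) \<le> dist (snd_node e) (rcv_node e')"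
          using e2(2) e' by auto
        ultimately show ?thesis unfolding xdist_def len_def by (simp add: dist_commute)
      qed
      have eq: "abar \<alpha> N \<beta> e e' = (if dpow \<alpha> (xdist e e') = 0 then 1
                else min 1 (c' * dpow \<alpha> (len e) / dpow \<alpha> (xdist e e')))"
      proof -
        have "gam \<alpha> N \<beta> e' * xsig \<alpha> e e' / sig \<alpha> e' = c' * dpow \<alpha> (len e) / dpow \<alpha> (xdist e e')"
          unfolding c'_def xsig_def be(4) by (simp add: mult_ac)
        thus ?thesis unfolding abar_def by simp
      qed
      have "abar \<alpha> N \<beta> e e' \<le> max 1 (2*(\<beta>*(1+\<epsilon>)/\<epsilon>)) * ((1+2) powr \<alpha>) * dpow \<alpha> (len e') / dpow \<alpha> (xdist e' e2)"
        unfolding eq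
        by (rule key[OF assms(1) be(2) e'L(3) _ _ zpos tri _ _ _ c'0 c'M])
          (simp_all add: xdist_def)
      thus ?thesis unfolding M_def by simp
    qed
    have "(\<Sum>e'\<in>A. abar \<alpha> N \<beta> e e') = abar \<alpha> N \<beta> e e2 + (\<Sum>e'\<in>A - {e2}. abar \<alpha> N \<beta> e e')"
      using finA e2(1) by (simp add: sum.remove)
    also have "\<dots> \<le> 1 + (\<Sum>e'\<in>A - {e2}. M * 3 powr \<alpha> * (dpow \<alpha> (len e') / dpow \<alpha> (xdist e' e2)))"
      using bnd abar_le1 by (intro add_mono sum_mono) auto
    also have "\<dots> = 1 + M * 3 powr \<alpha> * (\<Sum>e'\<in>A - {e2}. dpow \<alpha> (len e') / dpow \<alpha> (xdist e' e2))"
      by (simp add: sum_distrib_left)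
    also have "\<dots> \<le> 1 + M * 3 powr \<alpha> * (2/\<beta>)"
    proof -
      have "(\<Sum>e'\<in>A - {e2}. dpow \<alpha> (len e') / dpow \<alpha> (xdist e' e2)) \<le> 2/\<beta>"
        apply (rule feas_sum[OF assms(1-7) e2L])
         apply (use e2(1) in \<open>force simp: A_def\<close>)
        using e2(1) bucket_ratio unfolding A_def by blast
      hence "M * 3 powr \<alpha> * (\<Sum>e'\<in>A - {e2}. dpow \<alpha> (len e') / dpow \<alpha> (xdist e' e2)) \<le> M * 3 powr \<alpha> * (2/\<beta>)"
        by (rule mult_left_mono[OF _ K0])
      thus ?thesis by linarith
    qed
    finally show ?thesis unfolding A_def M_def .
  qed
qed

lemma part1:
  assumes "\<alpha>\<ge>0" "N>0" "\<beta>>0" "\<epsilon>>0" "instance_ok \<alpha> N \<beta> \<epsilon> V Lk"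
    "L \<subseteq> Lk" "sinr_feasible \<alpha> N \<beta> L" "e \<in> bucket \<alpha> Lk i"
  shows "(\<Sum>e'\<in>{e'\<in>L. e' \<in> bucket \<alpha> Lk i \<and> len e \<le> len e'}. abar \<alpha> N \<beta> e' e)
     \<le> 1 + max 1 (2*(\<beta>*(1+\<epsilon>)/\<epsilon>)) * 5 powr \<alpha> * (2/\<beta>)"
proof -
  define A where "A = {e'\<in>L. e' \<in> bucket \<alpha> Lk i \<and> len e \<le> len e'}"
  define M where "M = max 1 (2*(\<beta>*(1+\<epsilon>)/\<epsilon>))"
  have M1: "M \<ge> 1" unfolding M_def by simp
  have K0: "M * 5 powr \<alpha> \<ge> 0" using M1 by simp
  have fin: "finite L" using assms(5,6) unfolding instance_ok_def by (auto intro: finite_subset)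
  hence finA: "finite A" unfolding A_def by simp
  have eLk: "e \<in> Lk" using assms(8) unfolding bucket_def by simp
  note be = basic[OF assms(1-5) eLk]
  show ?thesis
  proof (cases "A = {}")
    case True thus ?thesis using K0 assms(3) unfolding A_def[symmetric] M_def[symmetric] by simp
  next
    case False
    obtain e2 where e2: "e2 \<in> A" "\<forall>y\<in>A. dist (rcv_node e) (rcv_node e2) \<le> dist (rcv_node e) (rcv_node y)"
      using obtain_min[OF finA False, of "\<lambda>y. dist (rcv_node e) (rcv_node y)"] by blast
    have e2L: "e2 \<in> L" using e2 unfolding A_def by simp
    have bnd: "abar \<alpha> N \<beta> e' e \<le> M * 5 powr \<alpha> * (dpow \<alpha> (len e') / dpow \<alpha> (xdist e' e2))"
      if e': "e' \<in> A - {e2}" for e'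
    proof -
      have e'L: "e' \<in> L" "e' \<in> bucket \<alpha> Lk i" "len e \<le> len e'" "e' \<noteq> e2"
        using e' unfolding A_def by auto
      have e'Lk: "e' \<in> Lk" using e'L assms(6) by auto
      note bb = basic[OF assms(1-5) e'Lk]
      have zpos: "dpow \<alpha> (xdist e' e2) > 0"
        using assms(7) e2L e'L unfolding sinr_feasible_def by blast
      define c' where "c' = gam \<alpha> N \<beta> e * sig \<alpha> e' / sig \<alpha> e"
      have c'0: "c' \<ge> 0" unfolding c'_def using bb be by simp
      have "sig \<alpha> e' / sig \<alpha> e \<le> 2" using bucket_ratio[OF e'L(2) assms(8)] be(1)
        by (simp add: field_simps)
      moreover have "c' = gam \<alpha> N \<beta> e * (sig \<alpha> e' / sig \<alpha> e)" unfolding c'_def by simp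
      moreover have "sig \<alpha> e' / sig \<alpha> e \<ge> 0" using bb be by simp
      ultimately have "c' \<le> (\<beta>*(1+\<epsilon>)/\<epsilon>) * 2"
      proof -
        assume a: "sig \<alpha> e' / sig \<alpha> e \<le> 2" "c' = gam \<alpha> N \<beta> e * (sig \<alpha> e' / sig \<alpha> e)"
          "0 \<le> sig \<alpha> e' / sig \<alpha> e"
        have "0 \<le> \<beta>*(1+\<epsilon>)/\<epsilon>" using be(5,6) by linarith
        thus ?thesis using mult_mono[OF be(6) a(1)] a by simp
      qed
      hence c'M: "c' \<le> 2*(\<beta>*(1+\<epsilon>)/\<epsilon>)" by (simp add: mult.commute)
      have tri: "xdist e' e2 \<le> 3 * len e' + 2 * xdist e' e"
      proof -
        have "xdist e' e2 \<le> dist (snd_node e') (rcv_node e') + dist (rcv_node e') (rcv_node e)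
              + dist (rcv_node e) (rcv_node e2)"
          unfolding xdist_def
          using dist_triangle[of "snd_node e'" "rcv_node e2" "rcv_node e'"]
            dist_triangle[of "rcv_node e'" "rcv_node e2" "rcv_node e"] by linarith
        moreover have "dist (rcv_node e) (rcv_node e2) \<le> dist (rcv_node e) (rcv_node e')"
          using e2(2) e' by auto
        moreover have "dist (rcv_node e') (rcv_node e) \<le> dist (rcv_node e') (snd_node e') + dist (snd_node e') (rcv_node e)"
          by (rule dist_triangle)
        ultimately show ?thesis unfolding xdist_def len_def by (simp add: dist_commute)
      qed
      have eq: "abar \<alpha> N \<beta> e' e = (if dpow \<alpha> (xdist e' e) = 0 then 1
                else min 1 (c' * dpow \<alpha> (len e') / dpow \<alpha> (xdist e' e)))"
      proof -
        have "gam \<alpha> N \<beta> e * xsig \<alpha> e' e / sig \<alpha> e = c' * dpow \<alpha> (len e') / dpow \<alpha> (xdist e' e)"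
          unfolding c'_def xsig_def bb(4) by (simp add: mult_ac)
        thus ?thesis unfolding abar_def by simp
      qed
      have "abar \<alpha> N \<beta> e' e \<le> max 1 (2*(\<beta>*(1+\<epsilon>)/\<epsilon>)) * ((3+2) powr \<alpha>) * dpow \<alpha> (len e') / dpow \<alpha> (xdist e' e2)"
        unfolding eq
        by (rule key[OF assms(1) bb(2) order_refl _ _ zpos tri _ _ _ c'0 c'M])
          (simp_all add: xdist_def)
      thus ?thesis unfolding M_def by simp
    qed
    have "(\<Sum>e'\<in>A. abar \<alpha> N \<beta> e' e) = abar \<alpha> N \<beta> e2 e + (\<Sum>e'\<in>A - {e2}. abar \<alpha> N \<beta> e' e)"
      using finA e2(1) by (simp add: sum.remove)
    also have "\<dots> \<le> 1 + (\<Sum>e'\<in>A - {e2}. M * 5 powr \<alpha> * (dpow \<alpha> (len e') / dpow \<alpha> (xdist e' e2)))"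
      using bnd abar_le1 by (intro add_mono sum_mono) auto
    also have "\<dots> = 1 + M * 5 powr \<alpha> * (\<Sum>e'\<in>A - {e2}. dpow \<alpha> (len e') / dpow \<alpha> (xdist e' e2))"
      by (simp add: sum_distrib_left)
    also have "\<dots> \<le> 1 + M * 5 powr \<alpha> * (2/\<beta>)"
    proof -
      have "(\<Sum>e'\<in>A - {e2}. dpow \<alpha> (len e') / dpow \<alpha> (xdist e' e2)) \<le> 2/\<beta>"
        apply (rule feas_sum[OF assms(1-7) e2L])
         apply (use e2(1) in \<open>force simp: A_def\<close>)
        using e2(1) bucket_ratio unfolding A_def by blast
      hence "M * 5 powr \<alpha> * (\<Sum>e'\<in>A - {e2}. dpow \<alpha> (len e') / dpow \<alpha> (xdist e' e2)) \<le> M * 5 powr \<alpha> * (2/\<beta>)"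
        by (rule mult_left_mono[OF _ K0])
      thus ?thesis by linarith
    qed
    finally show ?thesis unfolding A_def M_def .
  qed
qed


lemma abar_nonneg:
  assumes "\<alpha>\<ge>0" "N>0" "\<beta>>0" "\<epsilon>>0" "instance_ok \<alpha> N \<beta> \<epsilon> V Lk" "e\<in>Lk" "e'\<in>Lk"
  shows "abar \<alpha> N \<beta> e' e \<ge> 0"
proof -
  note be = basic[OF assms(1-5) assms(6)] and bb = basic[OF assms(1-5) assms(7)]
  have "dpow \<alpha> (xdist e' e) \<ge> 0" by (simp add: dpow_def)
  hence "xsig \<alpha> e' e \<ge> 0" unfolding xsig_def using bb(7) by simp
  thus ?thesis unfolding abar_def using be by simp
qed

lemma per_time:
  assumes "\<alpha>\<ge>0" "N>0" "\<beta>>0" "\<epsilon>>0" "instance_ok \<alpha> N \<beta> \<epsilon> V Lk"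
    "L \<subseteq> Lk" "sinr_feasible \<alpha> N \<beta> L" "e \<in> bucket \<alpha> Lk i"
  shows "(\<Sum>e'\<in>{e'\<in>L. e' \<in> bucket \<alpha> Lk i \<and> len e \<le> len e'}. abar \<alpha> N \<beta> e' e + abar \<alpha> N \<beta> e e')
     \<le> 2 + max 1 (2*(\<beta>*(1+\<epsilon>)/\<epsilon>)) * 5 powr \<alpha> * (2/\<beta>) + max 1 (2*(\<beta>*(1+\<epsilon>)/\<epsilon>)) * 3 powr \<alpha> * (2/\<beta>)"
  using part1[OF assms] part2[OF assms] by (simp add: sum.distrib)

lemma card_sum: "real (card {t. t < (T::nat) \<and> P t}) = (\<Sum>t<T. if P t then 1 else 0)"
proof -
  have "{t. t < T \<and> P t} = {t \<in> {..<T}. P t}" by auto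
  hence "real (card {t. t < T \<and> P t}) = (\<Sum>t\<in>{t \<in> {..<T}. P t}. 1)" by simp
  also have "\<dots> = (\<Sum>t<T. if P t then 1 else 0)"
    using sum.inter_filter[of "{..<T}" "\<lambda>_. 1::real" P] by simp
  finally show ?thesis .
qed

theorem lemma6:
  fixes \<alpha> N \<beta> \<epsilon> :: real
  assumes "\<alpha> \<ge> 0" and "N > 0" and "\<beta> > 0" and "\<epsilon> > 0"
  shows "\<exists>lam::real. lam \<ge> 1 \<and>
    (\<forall>(V::node set) (Lk::link set) (k::nat) (src::nat \<Rightarrow> node) (snk::nat \<Rightarrow> node)
       (b::nat \<Rightarrow> real) (f::nat \<Rightarrow> link \<Rightarrow> real) (T::nat) (Ls::nat \<Rightarrow> link set).
      instance_ok \<alpha> N \<beta> \<epsilon> V Lk \<and>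
      (\<forall>j<k. src j \<in> V \<and> snk j \<in> V \<and> 0 \<le> b j) \<and>
      in_F V Lk k src snk b f \<and>
      T > 0 \<and> sinr_schedule \<alpha> N \<beta> Lk T Ls \<and> supports Lk T Ls k f
      \<longrightarrow> lp_feasible \<alpha> N \<beta> V Lk k src snk b (\<lambda>j e. f j e / lam) \<and>
          tot_val Lk k src f / lam \<le> Fstar \<alpha> N \<beta> V Lk k src snk b)"
proof -
  define M where "M = max 1 (2*(\<beta>*(1+\<epsilon>)/\<epsilon>))"
  define C0 where "C0 = 2 + M * 5 powr \<alpha> * (2/\<beta>) + M * 3 powr \<alpha> * (2/\<beta>)"
  define lam where "lam = 1 + C0"
  have M1: "M \<ge> 1" unfolding M_def by simp
  have C00: "C0 \<ge> 0" unfolding C0_def using M1 assms(3) by simp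
  have lam1: "lam \<ge> 1" unfolding lam_def using C00 by simp
  have lam0: "lam > 0" using lam1 by simp
  show ?thesis
  proof (rule exI[of _ lam], intro conjI allI impI, rule lam1)
    fix V Lk k src snk b f T Ls
    assume H: "instance_ok \<alpha> N \<beta> \<epsilon> V Lk \<and>
      (\<forall>j<k. src j \<in> V \<and> snk j \<in> V \<and> 0 \<le> b j) \<and>
      in_F V Lk k src snk b f \<and>
      T > 0 \<and> sinr_schedule \<alpha> N \<beta> Lk T Ls \<and> supports Lk T Ls k (f::nat \<Rightarrow> link \<Rightarrow> real)"
    hence inst: "instance_ok \<alpha> N \<beta> \<epsilon> V Lk" and bj: "\<forall>j<k. 0 \<le> b j"
      and inF: "in_F V Lk k src snk b f" and Tp: "T > 0"
      and sch: "sinr_schedule \<alpha> N \<beta> Lk T Ls" and sup: "supports Lk T Ls k f" by auto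
    note ass = assms inst
    have finLk: "finite Lk" using inst unfolding instance_ok_def by simp
    define fl where "fl = (\<lambda>j e. f j e / lam)"
    have tfl: "tot_flow k fl e = tot_flow k f e / lam" for e
      unfolding tot_flow_def fl_def by (simp add: sum_divide_distrib)
    have fvl: "flow_val Lk s (\<lambda>e. g e / lam) = flow_val Lk s g / lam" for s g
      unfolding flow_val_def by (simp add: sum_divide_distrib diff_divide_distrib)
    have tvl: "tot_val Lk k src fl = tot_val Lk k src f / lam"
      unfolding tot_val_def fl_def fvl by (simp add: sum_divide_distrib)
    have fnn: "\<forall>j<k. \<forall>e\<in>Lk. 0 \<le> f j e" using inF unfolding in_F_def is_flow_def by blast
    have tnn: "tot_flow k f e \<ge> 0" if "e \<in> Lk" for e
      unfolding tot_flow_def using fnn that by (intro sum_nonneg) auto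
    have inF': "in_F V Lk k src snk b fl"
      unfolding in_F_def
    proof (intro conjI allI impI ballI)
      fix j assume j: "j < k"
      have isf: "is_flow V Lk (src j) (snk j) (f j)" and fv: "flow_val Lk (src j) (f j) \<le> b j"
        using inF j unfolding in_F_def by auto
      show "is_flow V Lk (src j) (snk j) (fl j)"
        using isf lam0 unfolding is_flow_def fl_def by (simp add: sum_divide_distrib[symmetric])
      have "flow_val Lk (src j) (fl j) = flow_val Lk (src j) (f j) / lam"
        unfolding fl_def using fvl by simp
      also have "\<dots> \<le> b j"
      proof (cases "flow_val Lk (src j) (f j) \<ge> 0")
        case True
        hence "flow_val Lk (src j) (f j) / lam \<le> flow_val Lk (src j) (f j)"
          using lam1 mult_left_mono[of 1 lam "flow_val Lk (src j) (f j)"] by (simp add: divide_le_eq)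
        thus ?thesis using fv by linarith
      next
        case False
        hence "flow_val Lk (src j) (f j) / lam \<le> 0" using lam0 by (simp add: divide_le_0_iff)
        thus ?thesis using bj j by force
      qed
      finally show "flow_val Lk (src j) (fl j) \<le> b j" .
    next
      fix e assume e: "e \<in> Lk"
      have "tot_flow k f e \<le> 1" using inF e unfolding in_F_def by auto
      hence "tot_flow k f e / lam \<le> 1" using tnn[OF e] lam1 by (simp add: divide_le_eq)
      thus "tot_flow k fl e \<le> 1" using tfl by simp
    qed
    have LP: "tot_flow k fl e +
        (\<Sum>e'\<in>{e'\<in>bucket \<alpha> Lk i. len e' \<ge> len e}.
            (abar \<alpha> N \<beta> e' e + abar \<alpha> N \<beta> e e') * tot_flow k fl e') \<le> 1"
      if eB: "e \<in> bucket \<alpha> Lk i" for i e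
    proof -
      define Bs where "Bs = {e'\<in>bucket \<alpha> Lk i. len e' \<ge> len e}"
      define w where "w = (\<lambda>e'. abar \<alpha> N \<beta> e' e + abar \<alpha> N \<beta> e e')"
      have eLk: "e \<in> Lk" using eB unfolding bucket_def by simp
      have BsLk: "Bs \<subseteq> Lk" unfolding Bs_def bucket_def by auto
      have finBs: "finite Bs" using BsLk finLk by (rule finite_subset)
      have w0: "w e' \<ge> 0" if "e' \<in> Bs" for e'
        unfolding w_def using abar_nonneg[OF ass eLk, of e'] abar_nonneg[OF ass _ eLk, of e'] that BsLk
        by auto
      define cnt where "cnt = (\<lambda>e'. real (card {t. t < T \<and> e' \<in> Ls t}))"
      have tle: "tot_flow k f e' \<le> cnt e' / real T" if "e' \<in> Bs" for e'
      proof -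
        have "real T * tot_flow k f e' \<le> cnt e'" using sup that BsLk unfolding supports_def cnt_def by auto
        thus ?thesis using Tp by (simp add: field_simps)
      qed
      have "(\<Sum>e'\<in>Bs. w e' * tot_flow k f e') \<le> (\<Sum>e'\<in>Bs. w e' * (cnt e' / real T))"
        using w0 tle by (intro sum_mono mult_left_mono) auto
      also have "\<dots> = (\<Sum>e'\<in>Bs. w e' * cnt e') / real T"
        by (simp add: sum_divide_distrib)
      also have "(\<Sum>e'\<in>Bs. w e' * cnt e') = (\<Sum>t<T. \<Sum>e'\<in>Bs. if e' \<in> Ls t then w e' else 0)"
      proof -
        have "(\<Sum>e'\<in>Bs. w e' * cnt e') = (\<Sum>e'\<in>Bs. \<Sum>t<T. if e' \<in> Ls t then w e' else 0)"
          unfolding cnt_def card_sum by (simp add: sum_distrib_left if_distrib cong: if_cong)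
        also have "\<dots> = (\<Sum>t<T. \<Sum>e'\<in>Bs. if e' \<in> Ls t then w e' else 0)" by (rule sum.swap)
        finally show ?thesis .
      qed
      also have "(\<Sum>t<T. \<Sum>e'\<in>Bs. if e' \<in> Ls t then w e' else 0) \<le> (\<Sum>t<T. C0)"
      proof (rule sum_mono)
        fix t assume t: "t \<in> {..<T}"
        have Lt: "Ls t \<subseteq> Lk" "sinr_feasible \<alpha> N \<beta> (Ls t)" using sch t unfolding sinr_schedule_def by auto
        have "(\<Sum>e'\<in>Bs. if e' \<in> Ls t then w e' else 0) = (\<Sum>e'\<in>{e'\<in>Bs. e' \<in> Ls t}. w e')"
          by (rule sum.inter_filter[symmetric]) (rule finBs)
        also have "{e'\<in>Bs. e' \<in> Ls t} = {e'\<in>Ls t. e' \<in> bucket \<alpha> Lk i \<and> len e \<le> len e'}"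
          unfolding Bs_def by auto
        also have "(\<Sum>e'\<in>{e'\<in>Ls t. e' \<in> bucket \<alpha> Lk i \<and> len e \<le> len e'}. w e') \<le> C0"
          unfolding w_def C0_def M_def by (rule per_time[OF ass Lt eB])
        finally show "(\<Sum>e'\<in>Bs. if e' \<in> Ls t then w e' else 0) \<le> C0" .
      qed
      finally have S: "(\<Sum>e'\<in>Bs. w e' * tot_flow k f e') \<le> C0"
        using Tp by (simp add: divide_le_eq)
      have "tot_flow k fl e + (\<Sum>e'\<in>Bs. w e' * tot_flow k fl e')
          = (tot_flow k f e + (\<Sum>e'\<in>Bs. w e' * tot_flow k f e')) / lam"
        unfolding tfl by (simp add: sum_divide_distrib add_divide_distrib)
      also have "\<dots> \<le> 1"
      proof -
        have "tot_flow k f e \<le> 1" using inF eLk unfolding in_F_def by auto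
        hence "tot_flow k f e + (\<Sum>e'\<in>Bs. w e' * tot_flow k f e') \<le> lam" using S unfolding lam_def by linarith
        thus ?thesis using lam0 by (simp add: divide_le_eq)
      qed
      finally show ?thesis unfolding Bs_def w_def .
    qed
    have lpf: "lp_feasible \<alpha> N \<beta> V Lk k src snk b fl"
      unfolding lp_feasible_def using inF' LP by blast
    thus "lp_feasible \<alpha> N \<beta> V Lk k src snk b (\<lambda>j e. f j e / lam)" unfolding fl_def .
    have bdd: "bdd_above {tot_val Lk k src g | g. lp_feasible \<alpha> N \<beta> V Lk k src snk b g}"
    proof (rule bdd_aboveI[where M = "\<Sum>j<k. b j"])
      fix x assume "x \<in> {tot_val Lk k src g | g. lp_feasible \<alpha> N \<beta> V Lk k src snk b g}"
      then obtain g where x: "x = tot_val Lk k src g" and g: "lp_feasible \<alpha> N \<beta> V Lk k src snk b g" by auto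
      have "\<forall>j<k. flow_val Lk (src j) (g j) \<le> b j" using g unfolding lp_feasible_def in_F_def by auto
      thus "x \<le> (\<Sum>j<k. b j)" unfolding x tot_val_def by (intro sum_mono) auto
    qed
    have "tot_val Lk k src f / lam = tot_val Lk k src fl" using tvl by simp
    also have "\<dots> \<le> Fstar \<alpha> N \<beta> V Lk k src snk b"
      unfolding Fstar_def using lpf by (intro cSup_upper[OF _ bdd]) auto
    finally show "tot_val Lk k src f / lam \<le> Fstar \<alpha> N \<beta> V Lk k src snk b" .
  qed
qed

end
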